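(* Let $L\subset L(p,1)$ be a framed oriented link with diagram $D$, augmented fundamental rack $R(D)$ and automorphism $A$ as in the setup, and let $X$ be a finite rack. Suppose $f\colon R(D)\to X$ satisfies $f(x\triangleright y)=f(x)\triangleright f(y)$ for all $x,y\in R(D)$. Then for all $z,w\in R(D)$: if $f(A^k(z))=f(A^k(w))$ for all $0\le k\le p-1$, then $f(A^k(z))=f(A^k(w))$ for all $k\in\mathbb{N}$.
   Context: A rack is a nonempty set with a binary operation $\triangleright$ such that (R1) for all $x,y$ there is a unique $z$ with $z\triangleright y=x$, and (R2) $(x\triangleright y)\triangleright z=(x\triangleright z)\triangleright(y\triangleright z)$. Write $t\triangleright\overline y$ for the unique $z$ with $z\triangleright y=t$, $t\triangleright y^{\pm1}$ for $t\triangleright y$ resp. $t\triangleright\overline y$; iterated expressions are parenthesized from the left. Setup: $L(p,1)$ is $p$-surgery on an unknot $U\subset S^3$ drawn with $p$ positive kinks; the diagram $D$ of $L\cup U$ has $d\ge 0$ strands of $L$ passing through the disk bounded by $U$, $m$ crossings with both strands in $L$, arcs of $L$ labelled $x_1,\dots,x_{m+d}$ where for $i\le d$ the arc $x_i$ becomes $x_{m+i}$ upon passing under the arc $a$ of $U$; $\epsilon_i\in\{\pm1\}$ is $1$ if $x_i$ follows $x_{m+i}$ in the orientation of $L$ and $-1$ otherwise; crossing relations are $x_i\triangleright x_j=x_l$ for over-arc $x_j$, under-arc $x_i$ on its right and $x_l$ on its left. $R(D)$ is the rack with general presentation (generators $x_i$ primary, $a$ operator; the operator group acts on itself by conjugation)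 $[\{x_1,\dots,x_{m+d}\},\{a\}:\{\text{crossing relations},\ x_i^a=x_{m+i}\ (1\le i\le d)\},\{a^p\equiv x_d^{\epsilon_d}\cdots x_1^{\epsilon_1}\}]$ if $d>0$ and $[\{x_1,\dots,x_m\},\{a\}:\{\text{crossing relations}\},\{a^p\equiv1\}]$ if $d=0$. $A\colon R(D)\to R(D)$ is the rack automorphism $A(x)=x^a$, and $F(x)=x\triangleright x_d^{\epsilon_d}\triangleright\cdots\triangleright x_1^{\epsilon_1}$ (if $d>0$), $F=\mathrm{id}$ (if $d=0$); one has $A^p=F$. *)

theory Defs
  imports Main
begin

definition is_rack :: "('a \<Rightarrow> 'a \<Rightarrow> 'a) \<Rightarrow> bool" where
  "is_rack op \<longleftrightarrow> (\<forall>x y. \<exists>!z. op z y = x) \<and>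
     (\<forall>x y z. op (op x y) z = op (op x z) (op y z))"

definition rack_inv_op :: "('a \<Rightarrow> 'a \<Rightarrow> 'a) \<Rightarrow> 'a \<Rightarrow> 'a \<Rightarrow> 'a" where
  "rack_inv_op op t y = (THE z. op z y = t)"

definition rack_act :: "('a \<Rightarrow> 'a \<Rightarrow> 'a) \<Rightarrow> 'a \<Rightarrow> 'a \<Rightarrow> int \<Rightarrow> 'a" where
  "rack_act op t y e = (if e = 1 then op t y else rack_inv_op op t y)"

text \<open>rack_Fseq op x eps k t = t \<triangleright> x_k^{eps_k} \<triangleright> ... \<triangleright> x_1^{eps_1}
  (parenthesized from the left).\<close>
fun rack_Fseq :: "('a \<Rightarrow> 'a \<Rightarrow> 'a) \<Rightarrow> (nat \<Rightarrow> 'a) \<Rightarrow> (nat \<Rightarrow> int) \<Rightarrow> nat \<Rightarrow> 'a \<Rightarrow> 'a" where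
  "rack_Fseq op x eps 0 t = t"
| "rack_Fseq op x eps (Suc k) t = rack_Fseq op x eps k (rack_act op t (x (Suc k)) (eps (Suc k)))"

definition rack_hom :: "('a \<Rightarrow> 'a \<Rightarrow> 'a) \<Rightarrow> ('b \<Rightarrow> 'b \<Rightarrow> 'b) \<Rightarrow> ('a \<Rightarrow> 'b) \<Rightarrow> bool" where
  "rack_hom opR opX f \<longleftrightarrow> (\<forall>x y. f (opR x y) = opX (f x) (f y))"

definition rack_aut :: "('a \<Rightarrow> 'a \<Rightarrow> 'a) \<Rightarrow> ('a \<Rightarrow> 'a) \<Rightarrow> bool" where
  "rack_aut op A \<longleftrightarrow> bij A \<and> rack_hom op op A"

end

theory Submission
  imports Defs
begin

lemma hom_inv:
  assumes R: "is_rack opR" and X: "is_rack opX" and h: "rack_hom opR opX f"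
  shows "f (rack_inv_op opR t y) = rack_inv_op opX (f t) (f y)"
proof -
  have e1: "opR (rack_inv_op opR t y) y = t"
    using R unfolding is_rack_def rack_inv_op_def by (metis (mono_tags, lifting) theI')
  have "opX (f (rack_inv_op opR t y)) (f y) = f t"
    using h e1 unfolding rack_hom_def by metis
  moreover have "\<exists>!z. opX z (f y) = f t" using X unfolding is_rack_def by blast
  ultimately show ?thesis unfolding rack_inv_op_def by (metis (mono_tags, lifting) the_equality)
qed

lemma hom_Fseq:
  assumes R: "is_rack opR" and X: "is_rack opX" and h: "rack_hom opR opX f"
  shows "f (rack_Fseq opR x eps n t) = rack_Fseq opX (f \<circ> x) eps n (f t)"
proof (induction n arbitrary: t)
  case 0 then show ?case by simp
next
  case (Suc n)
  have "f (rack_act opR t (x (Suc n)) (eps (Suc n))) = rack_act opX (f t) (f (x (Suc n))) (eps (Suc n))"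
    using hom_inv[OF R X h] h unfolding rack_act_def rack_hom_def by simp
  then show ?case using Suc by simp
qed

theorem lemma3:
  fixes opR :: "'r \<Rightarrow> 'r \<Rightarrow> 'r"
    and opX :: "'x::finite \<Rightarrow> 'x \<Rightarrow> 'x"
    and A :: "'r \<Rightarrow> 'r"
    and f :: "'r \<Rightarrow> 'x"
    and p m d :: nat
    and x :: "nat \<Rightarrow> 'r"
    and eps :: "nat \<Rightarrow> int"
  assumes "is_rack opR"
    and "is_rack opX"
    and "p \<ge> 1"
    and "\<forall>i\<in>{1..d}. eps i = 1 \<or> eps i = -1"
    and "rack_aut opR A"
    and "\<forall>i\<in>{1..d}. A (x i) = x (m + i)"
    and "A ^^ p = rack_Fseq opR x eps d"
    and "rack_hom opR opX f"
  shows "\<forall>z w. (\<forall>k<p. f ((A ^^ k) z) = f ((A ^^ k) w)) \<longrightarrow>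
               (\<forall>k. f ((A ^^ k) z) = f ((A ^^ k) w))"
proof (intro allI impI)
  fix z w k
  assume base: "\<forall>k<p. f ((A ^^ k) z) = f ((A ^^ k) w)"
  have step: "f ((A ^^ (j + p)) u) = rack_Fseq opX (f \<circ> x) eps d (f ((A ^^ j) u))" for j u
  proof -
    have "(A ^^ (j + p)) u = (A ^^ p) ((A ^^ j) u)" by (metis funpow_add add.commute comp_apply)
    also have "\<dots> = rack_Fseq opR x eps d ((A ^^ j) u)" using assms(7) by simp
    finally show ?thesis using hom_Fseq[OF assms(1,2,8)] by simp
  qed
  show "f ((A ^^ k) z) = f ((A ^^ k) w)"
  proof (induction k rule: less_induct)
    case (less k)
    show ?case
    proof (cases "k < p")
      case True then show ?thesis using base by simp
    next
      case False
      then obtain j where j: "k = j + p" by (metis add.commute le_add_diff_inverse not_less)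
      have "j < k" using j assms(3) by simp
      then show ?thesis using less j step by metis
    qed
  qed
qed

end
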